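(* Let $S$ be a closed subspace of $\ell_\infty$ with $c_0\subseteq S$ such that the quotient $\ell_\infty/S$ is separable. Then $S$ is an $\ell_\infty$-Grothendieck subspace.
   Context: Let $S$ be a closed subspace of $\ell_\infty$ containing $c_0$ and let $j:c_0\to S$ be the inclusion map. Then $j^{**}:c_0^{**}\equiv\ell_\infty\to S^{**}$ identifies $\ell_\infty$ with a subspace of $S^{**}$ containing $S$. A sequence $(x_n^* )$ in $S^*$ is said to be $\sigma(S^*,\ell_\infty)$-convergent to $x^*\in S^*$ if $\langle j^{**}z,x_n^*\rangle\to\langle j^{**}z,x^*\rangle$ for every $z\in\ell_\infty$ (equivalently, the restrictions $j^*x_n^*\in\ell_1$ converge to $j^*x^*$ in the topology $\sigma(\ell_1,\ell_\infty)$). The closed subspace $S$ of $\ell_\infty$ is called an $\ell_\infty$-Grothendieck subspace if $c_0\subseteq S$ and every $\sigma(S^*,S)$-convergent (weak$^*$-convergent) sequence in $S^*$ is $\sigma(S^*,\ell_\infty)$-convergent (to the same limit). *)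

theory Defs
  imports "HOL-Analysis.Analysis"
begin

(* The Banach space l-infinity of bounded real sequences, realised as the type
  nat =>C real of bounded continuous functions on the discrete space nat,
  with the supremum norm. *)

type_synonym linf = "nat \<Rightarrow>\<^sub>C real"

definition c0 :: "linf set" where
  "c0 = {x. (\<lambda>n. apply_bcontfun x n) \<longlonglongrightarrow> 0}"

definition unitvec :: "nat \<Rightarrow> linf" where
  "unitvec n = Bcontfun (\<lambda>k. if k = n then 1 else 0)"

(* Elements of the dual S^* : bounded linear functionals on the subspace S
  (only their values on S matter). *)
definition dual_elem :: "linf set \<Rightarrow> (linf \<Rightarrow> real) \<Rightarrow> bool" where
  "dual_elem S f \<longleftrightarrow>
     (\<forall>x\<in>S. \<forall>y\<in>S. f (x + y) = f x + f y) \<and>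
     (\<forall>c. \<forall>x\<in>S. f (c *\<^sub>R x) = c * f x) \<and>
     (\<exists>K. \<forall>x\<in>S. \<bar>f x\<bar> \<le> K * norm x)"

definition weak_star_conv :: "linf set \<Rightarrow> (nat \<Rightarrow> linf \<Rightarrow> real) \<Rightarrow> (linf \<Rightarrow> real) \<Rightarrow> bool" where
  "weak_star_conv S phi psi \<longleftrightarrow> (\<forall>x\<in>S. (\<lambda>k. phi k x) \<longlonglongrightarrow> psi x)"

(* sigma(S^*, l-infinity) convergence: the restrictions j^* x_k^* to c0, viewed as
  elements of l1 = c0^* via their coordinates x^*(e_n), converge in sigma(l1, l-infinity);
  the pairing of z in l-infinity with a in l1 is the sum of z_n a_n. *)
definition linf_conv :: "(nat \<Rightarrow> linf \<Rightarrow> real) \<Rightarrow> (linf \<Rightarrow> real) \<Rightarrow> bool" where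
  "linf_conv phi psi \<longleftrightarrow>
     (\<forall>z::linf. (\<lambda>k. \<Sum>n. apply_bcontfun z n * phi k (unitvec n)) \<longlonglongrightarrow> (\<Sum>n. apply_bcontfun z n * psi (unitvec n)))"

definition linf_grothendieck :: "linf set \<Rightarrow> bool" where
  "linf_grothendieck S \<longleftrightarrow> c0 \<subseteq> S \<and>
     (\<forall>phi psi. (\<forall>k. dual_elem S (phi k)) \<and> dual_elem S psi \<and> weak_star_conv S phi psi
        \<longrightarrow> linf_conv phi psi)"

(* Separability of the quotient l-infinity / S with the quotient norm
  norm [x] = infdist x S: there is a countable set whose classes are dense. *)
definition separable_quotient :: "linf set \<Rightarrow> bool" where
  "separable_quotient S \<longleftrightarrow>
     (\<exists>D. countable D \<and> (\<forall>x. \<forall>e>0. \<exists>d\<in>D. infdist (x - d) S < e))"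

end

theory Submission
  imports Defs
begin


lemma bc_apply:
  fixes f :: "nat \<Rightarrow> real"
  assumes "\<And>n. \<bar>f n\<bar> \<le> B"
  shows "apply_bcontfun (Bcontfun f) = f"
proof -
  have "f \<in> bcontfun"
    by (rule bcontfun_normI) (use assms in auto)
  then show ?thesis by (simp add: Bcontfun_inverse)
qed

lemma bc_apply_fin:
  fixes f :: "nat \<Rightarrow> real"
  assumes "finite F" "\<And>n. n \<notin> F \<Longrightarrow> f n = 0"
  shows "apply_bcontfun (Bcontfun f) = f"
proof (rule bc_apply)
  fix n show "\<bar>f n\<bar> \<le> (\<Sum>i\<in>F. \<bar>f i\<bar>)"
  proof (cases "n \<in> F")
    case True then show ?thesis using assms(1) by (intro member_le_sum) auto
  next
    case False then show ?thesis using assms by (simp add: sum_nonneg)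
  qed
qed

lemma abs_apply_le: "\<bar>apply_bcontfun (x::linf) n\<bar> \<le> norm x"
  using norm_bounded[of x n] by simp

lemma norm_le_bc: "(\<And>n. \<bar>apply_bcontfun (x::linf) n\<bar> \<le> B) \<Longrightarrow> norm x \<le> B"
  by (rule norm_bound) simp

lemma apply_sum: "apply_bcontfun (sum (g::'a \<Rightarrow> linf) A) n = (\<Sum>i\<in>A. apply_bcontfun (g i) n)"
  by (induction A rule: infinite_finite_induct) auto

lemma unitvec_apply: "apply_bcontfun (unitvec m) n = (if n = m then 1 else 0)"
  unfolding unitvec_def by (subst bc_apply_fin[of "{m}"]) auto

lemma finsupp_expand:
  fixes x :: linf
  assumes "finite F" "\<And>n. n \<notin> F \<Longrightarrow> apply_bcontfun x n = 0"
  shows "x = (\<Sum>m\<in>F. apply_bcontfun x m *\<^sub>R unitvec m)"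
proof (rule bcontfun_eqI)
  fix n
  show "apply_bcontfun x n = apply_bcontfun (\<Sum>m\<in>F. apply_bcontfun x m *\<^sub>R unitvec m) n"
    unfolding apply_sum using assms
    by (cases "n \<in> F") (auto simp: unitvec_apply if_distrib sum.delta cong: if_cong)
qed

lemma finsupp_c0:
  fixes x :: linf
  assumes "finite F" "\<And>n. n \<notin> F \<Longrightarrow> apply_bcontfun x n = 0"
  shows "x \<in> c0"
proof -
  obtain N where "F \<subseteq> {..<N}"
    using assms(1) finite_nat_bounded by blast
  then have "\<forall>n\<ge>N. apply_bcontfun x n = 0" using assms(2) by force
  then have "(\<lambda>n. apply_bcontfun x n) \<longlonglongrightarrow> 0"
    by (intro tendsto_eventually) (auto simp: eventually_sequentially)
  then show ?thesis by (simp add: c0_def)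
qed

definition trunc :: "nat set \<Rightarrow> linf \<Rightarrow> linf" where
  "trunc E x = Bcontfun (\<lambda>n. if n \<in> E then apply_bcontfun x n else 0)"

lemma trunc_apply: "apply_bcontfun (trunc E x) n = (if n \<in> E then apply_bcontfun x n else 0)"
  unfolding trunc_def by (subst bc_apply[where B="norm x"]) (auto simp: abs_apply_le)

lemma trunc_c0: "finite E \<Longrightarrow> trunc E x \<in> c0"
  by (rule finsupp_c0[of E]) (auto simp: trunc_apply)


locale lin_on =
  fixes S :: "linf set" and f :: "linf \<Rightarrow> real"
  assumes S: "subspace S"
    and add: "\<And>x y. x \<in> S \<Longrightarrow> y \<in> S \<Longrightarrow> f (x + y) = f x + f y"
    and scal: "\<And>c x. x \<in> S \<Longrightarrow> f (c *\<^sub>R x) = c * f x"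
begin

lemma zero: "f 0 = 0"
  using scal[of 0 0] S by (simp add: subspace_0)

lemma diff: "x \<in> S \<Longrightarrow> y \<in> S \<Longrightarrow> f (x - y) = f x - f y"
proof -
  assume a: "x \<in> S" "y \<in> S"
  have "x - y = x + (-1::real) *\<^sub>R y" by simp
  moreover have "(-1::real) *\<^sub>R y \<in> S" using a S by (metis subspace_scale)
  ultimately show ?thesis using add[of x "(-1::real) *\<^sub>R y"] scal[of y "-1"] a by simp
qed

lemma sum: "finite A \<Longrightarrow> (\<And>i. i \<in> A \<Longrightarrow> g i \<in> S) \<Longrightarrow> f (sum g A) = (\<Sum>i\<in>A. f (g i))"
proof (induction A rule: finite_induct)
  case empty then show ?case by (simp add: zero)
next
  case (insert a A)
  then show ?case using S by (simp add: add subspace_sum)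
qed

end

lemma dual_lin_on: "subspace S \<Longrightarrow> dual_elem S f \<Longrightarrow> lin_on S f"
  unfolding dual_elem_def lin_on_def by auto


lemma unitvec_c0: "unitvec n \<in> c0"
  by (rule finsupp_c0[of "{n}"]) (auto simp: unitvec_apply)

definition coef :: "(linf \<Rightarrow> real) \<Rightarrow> nat \<Rightarrow> real" where
  "coef f n = f (unitvec n)"

definition pr :: "(nat \<Rightarrow> real) \<Rightarrow> linf \<Rightarrow> real" where
  "pr a x = (\<Sum>n. apply_bcontfun x n * a n)"

lemma pr_summable:
  fixes a :: "nat \<Rightarrow> real" and x :: linf
  assumes "summable (\<lambda>n. \<bar>a n\<bar>)"
  shows "summable (\<lambda>n. \<bar>apply_bcontfun x n * a n\<bar>)" "summable (\<lambda>n. apply_bcontfun x n * a n)"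
proof -
  have "summable (\<lambda>n. norm x * \<bar>a n\<bar>)" using assms by (rule summable_mult)
  moreover have "\<bar>apply_bcontfun x n * a n\<bar> \<le> norm x * \<bar>a n\<bar>" for n
    by (simp add: abs_mult mult_right_mono abs_apply_le)
  ultimately show "summable (\<lambda>n. \<bar>apply_bcontfun x n * a n\<bar>)"
    by (intro summable_rabs_comparison_test[where g="\<lambda>n. norm x * \<bar>a n\<bar>"]) auto
  then show "summable (\<lambda>n. apply_bcontfun x n * a n)"
    by (rule summable_rabs_cancel)
qed

lemma pr_bound:
  assumes "summable (\<lambda>n. \<bar>a n\<bar>)"
  shows "\<bar>pr a x\<bar> \<le> norm x * (\<Sum>n. \<bar>a n\<bar>)"
proof -
  have "\<bar>pr a x\<bar> \<le> (\<Sum>n. \<bar>apply_bcontfun x n * a n\<bar>)"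
    unfolding pr_def using pr_summable[OF assms] by (intro summable_rabs)
  also have "\<dots> \<le> (\<Sum>n. norm x * \<bar>a n\<bar>)"
    using pr_summable[OF assms] assms
    by (intro suminf_le summable_mult) (auto simp: abs_mult mult_right_mono abs_apply_le)
  also have "\<dots> = norm x * (\<Sum>n. \<bar>a n\<bar>)" using assms by (rule suminf_mult)
  finally show ?thesis .
qed

lemma pr_add:
  assumes "summable (\<lambda>n. \<bar>a n\<bar>)"
  shows "pr a (x + y) = pr a x + pr a y"
  unfolding pr_def using pr_summable(2)[OF assms, of x] pr_summable(2)[OF assms, of y]
  by (simp add: suminf_add distrib_right)

lemma pr_scal:
  assumes "summable (\<lambda>n. \<bar>a n\<bar>)"
  shows "pr a (c *\<^sub>R x) = c * pr a x"
  unfolding pr_def using pr_summable(2)[OF assms, of x]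
  by (simp add: suminf_mult[symmetric] mult.assoc)

lemma pr_diff:
  assumes "summable (\<lambda>n. \<bar>a n\<bar>)"
  shows "pr a (x - y) = pr a x - pr a y"
  unfolding pr_def using pr_summable(2)[OF assms, of x] pr_summable(2)[OF assms, of y]
  by (simp add: suminf_diff left_diff_distrib)

lemma pr_finsupp:
  assumes "finite F" "\<And>n. n \<notin> F \<Longrightarrow> apply_bcontfun x n = 0"
  shows "pr a x = (\<Sum>n\<in>F. apply_bcontfun x n * a n)"
  unfolding pr_def using assms by (intro suminf_finite) auto

definition lamf :: "(linf \<Rightarrow> real) \<Rightarrow> linf \<Rightarrow> real" where
  "lamf f x = f x - pr (coef f) x"

locale bfun = lin_on +
  fixes L :: real
  assumes c0S: "c0 \<subseteq> S" and Lpos: "L \<ge> 0" and bnd: "\<And>x. x \<in> S \<Longrightarrow> \<bar>f x\<bar> \<le> L * norm x"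
begin

lemma unitvec_S: "unitvec n \<in> S" using c0S unitvec_c0 by auto

lemma fin_eval:
  assumes "finite F" "\<And>n. n \<notin> F \<Longrightarrow> apply_bcontfun x n = 0"
  shows "f x = (\<Sum>n\<in>F. apply_bcontfun x n * coef f n)"
proof -
  have "f x = f (\<Sum>m\<in>F. apply_bcontfun x m *\<^sub>R unitvec m)"
    using finsupp_expand[OF assms] by simp
  also have "\<dots> = (\<Sum>m\<in>F. f (apply_bcontfun x m *\<^sub>R unitvec m))"
    using assms(1) S unitvec_S by (intro sum) (auto intro: subspace_scale)
  also have "\<dots> = (\<Sum>n\<in>F. apply_bcontfun x n * coef f n)"
    by (simp add: scal unitvec_S coef_def)
  finally show ?thesis .
qed

lemma fin_eval_pr:
  assumes "finite F" "\<And>n. n \<notin> F \<Longrightarrow> apply_bcontfun x n = 0"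
  shows "f x = pr (coef f) x"
  using fin_eval[OF assms] pr_finsupp[OF assms] by simp

lemma l1_fin:
  assumes "finite F"
  shows "(\<Sum>n\<in>F. \<bar>coef f n\<bar>) \<le> L"
proof -
  define x where "x = (\<Sum>m\<in>F. sgn (coef f m) *\<^sub>R unitvec m)"
  have xa: "apply_bcontfun x n = (if n \<in> F then sgn (coef f n) else 0)" for n
    unfolding x_def apply_sum using assms
    by (cases "n \<in> F") (auto simp: unitvec_apply if_distrib cong: if_cong)
  have "x \<in> c0" by (rule finsupp_c0[OF assms]) (simp add: xa)
  then have xS: "x \<in> S" using c0S by auto
  have nx: "norm x \<le> 1" by (rule norm_le_bc) (auto simp: xa abs_sgn_eq)
  have "f x = (\<Sum>n\<in>F. apply_bcontfun x n * coef f n)"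
    by (rule fin_eval[OF assms]) (simp add: xa)
  also have "\<dots> = (\<Sum>n\<in>F. \<bar>coef f n\<bar>)"
    by (intro sum.cong) (auto simp: xa sgn_mult_abs abs_sgn mult.commute)
  finally have "(\<Sum>n\<in>F. \<bar>coef f n\<bar>) = f x" by simp
  also have "\<dots> \<le> L * norm x" using bnd[OF xS] by simp
  also have "\<dots> \<le> L"
    using nx Lpos by (simp add: mult_left_le)
  finally show ?thesis .
qed

lemma l1_summable: "summable (\<lambda>n. \<bar>coef f n\<bar>)"
  by (rule bounded_imp_summable[where B=L]) (auto intro: l1_fin)

lemma l1_le: "(\<Sum>n. \<bar>coef f n\<bar>) \<le> L"
  using l1_summable by (rule suminf_le_const) (auto intro: l1_fin)

lemma lam_lin: "lin_on S (lamf f)"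
  unfolding lin_on_def lamf_def using S
  by (auto simp: add scal pr_add[OF l1_summable] pr_scal[OF l1_summable] algebra_simps)

lemma lam_bound: "x \<in> S \<Longrightarrow> \<bar>lamf f x\<bar> \<le> 2 * L * norm x"
proof -
  assume x: "x \<in> S"
  have "\<bar>lamf f x\<bar> \<le> \<bar>f x\<bar> + \<bar>pr (coef f) x\<bar>" unfolding lamf_def by simp
  also have "\<dots> \<le> L * norm x + norm x * L"
  proof (rule add_mono)
    show "\<bar>f x\<bar> \<le> L * norm x" using bnd[OF x] .
    show "\<bar>pr (coef f) x\<bar> \<le> norm x * L"
      using pr_bound[OF l1_summable, of x] l1_le
      by (meson order_trans mult_left_mono norm_ge_zero)
  qed
  finally show ?thesis by simp
qed

lemma lam_finsupp:
  assumes "finite F" "\<And>n. n \<notin> F \<Longrightarrow> apply_bcontfun x n = 0"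
  shows "lamf f x = 0"
  unfolding lamf_def using fin_eval_pr[OF assms] by simp

end



lemma lin_cont:
  assumes "lin_on S f" "\<And>x. x \<in> S \<Longrightarrow> \<bar>f x\<bar> \<le> K * norm x"
  shows "continuous_on S f"
  unfolding continuous_on_iff
proof (intro ballI allI impI)
  fix x e assume x: "x \<in> S" and e: "(0::real) < e"
  define K' where "K' = \<bar>K\<bar> + 1"
  have K': "K' > 0" unfolding K'_def by simp
  show "\<exists>d>0. \<forall>x'\<in>S. dist x' x < d \<longrightarrow> dist (f x') (f x) < e"
  proof (intro exI conjI ballI impI)
    show "e / K' > 0" using e K' by simp
    fix x' assume x': "x' \<in> S" and d: "dist x' x < e / K'"
    have "dist (f x') (f x) = \<bar>f (x' - x)\<bar>"
      using lin_on.diff[OF assms(1) x' x] by (simp add: dist_real_def)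
    also have "\<dots> \<le> K * norm (x' - x)"
      using assms(2) lin_on.S[OF assms(1)] x x' by (simp add: subspace_diff)
    also have "\<dots> \<le> K' * norm (x' - x)" unfolding K'_def by (intro mult_right_mono) auto
    also have "\<dots> < e"
    proof -
      have "norm (x' - x) * K' < e" using d K' by (simp add: dist_norm pos_less_divide_eq)
      then show ?thesis by (simp add: mult.commute)
    qed
    finally show "dist (f x') (f x) < e" .
  qed
qed

lemma linf_complete: "complete (UNIV :: linf set)"
  unfolding complete_def
proof (intro allI impI)
  fix X :: "nat \<Rightarrow> linf" assume "(\<forall>n. X n \<in> UNIV) \<and> Cauchy X"
  then have C: "Cauchy X" by simp
  have pc: "Cauchy (\<lambda>k. apply_bcontfun (X k) n)" for n
    unfolding Cauchy_iff
  proof (intro allI impI)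
    fix e :: real assume "e > 0"
    then obtain M where M: "\<forall>m\<ge>M. \<forall>k\<ge>M. norm (X m - X k) < e" using CauchyD[OF C] by blast
    show "\<exists>M. \<forall>m\<ge>M. \<forall>k\<ge>M. norm (apply_bcontfun (X m) n - apply_bcontfun (X k) n) < e"
    proof (intro exI allI impI)
      fix m k assume "m \<ge> M" "k \<ge> M"
      then have "norm (X m - X k) < e" using M by blast
      moreover have "\<bar>apply_bcontfun (X m - X k) n\<bar> \<le> norm (X m - X k)" by (rule abs_apply_le)
      ultimately show "norm (apply_bcontfun (X m) n - apply_bcontfun (X k) n) < e" by simp
    qed
  qed
  define l where "l n = lim (\<lambda>k. apply_bcontfun (X k) n)" for n
  have lt: "(\<lambda>k. apply_bcontfun (X k) n) \<longlonglongrightarrow> l n" for n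
    unfolding l_def using pc[of n] by (simp add: Cauchy_convergent_iff convergent_LIMSEQ_iff)
  have unif: "\<exists>M. \<forall>m\<ge>M. \<forall>n. \<bar>apply_bcontfun (X m) n - l n\<bar> \<le> e" if e: "e > 0" for e
  proof -
    obtain M where M: "\<forall>m\<ge>M. \<forall>k\<ge>M. norm (X m - X k) < e" using CauchyD[OF C e] by blast
    have "\<bar>apply_bcontfun (X m) n - l n\<bar> \<le> e" if m: "m \<ge> M" for m n
    proof -
      have "(\<lambda>k. \<bar>apply_bcontfun (X m) n - apply_bcontfun (X k) n\<bar>) \<longlonglongrightarrow> \<bar>apply_bcontfun (X m) n - l n\<bar>"
        by (intro tendsto_intros lt)
      moreover have "\<forall>k\<ge>M. \<bar>apply_bcontfun (X m) n - apply_bcontfun (X k) n\<bar> \<le> e"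
      proof (intro allI impI)
        fix k assume "k \<ge> M"
        then have "norm (X m - X k) < e" using M m by blast
        moreover have "\<bar>apply_bcontfun (X m - X k) n\<bar> \<le> norm (X m - X k)" by (rule abs_apply_le)
        ultimately show "\<bar>apply_bcontfun (X m) n - apply_bcontfun (X k) n\<bar> \<le> e" by simp
      qed
      ultimately show ?thesis by (intro LIMSEQ_le_const2) auto
    qed
    then show ?thesis by blast
  qed
  obtain M where M: "\<forall>m\<ge>M. \<forall>n. \<bar>apply_bcontfun (X m) n - l n\<bar> \<le> 1" using unif[of 1] by auto
  have lb: "\<bar>l n\<bar> \<le> norm (X M) + 1" for n
    using M[rule_format, of M n] abs_apply_le[of "X M" n] by linarith
  define y where "y = Bcontfun l"
  have ya: "apply_bcontfun y = l" unfolding y_def by (rule bc_apply[OF lb])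
  have "X \<longlonglongrightarrow> y"
    unfolding LIMSEQ_iff
  proof (intro allI impI)
    fix r :: real assume r: "r > 0"
    obtain M where M: "\<forall>m\<ge>M. \<forall>n. \<bar>apply_bcontfun (X m) n - l n\<bar> \<le> r / 2"
      using unif[of "r/2"] r by auto
    have "norm (X m - y) < r" if "m \<ge> M" for m
    proof -
      have "norm (X m - y) \<le> r / 2" by (rule norm_le_bc) (use M that in \<open>auto simp: ya\<close>)
      then show ?thesis using r by simp
    qed
    then show "\<exists>M. \<forall>m\<ge>M. norm (X m - y) < r" by blast
  qed
  then show "\<exists>y\<in>UNIV. X \<longlonglongrightarrow> y" by blast
qed

lemma cms_linf: "completely_metrizable_space (euclidean :: linf topology)"
proof -
  have "Met_TC.mcomplete TYPE(linf)" using linf_complete by simp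
  then show ?thesis
    unfolding completely_metrizable_space_def
    by (intro exI[of _ UNIV] exI[of _ dist]) (simp add: Met_TC.Metric_space_axioms)
qed

lemma ubp:
  assumes S: "subspace S" "closed S"
    and lin: "\<And>k. lin_on S (phi k)"
    and bd: "\<And>k. \<exists>K. \<forall>x\<in>S. \<bar>phi k x\<bar> \<le> K * norm x"
    and pw: "\<And>x. x \<in> S \<Longrightarrow> \<exists>B. \<forall>k. \<bar>phi k x\<bar> \<le> B"
  shows "\<exists>L>0. \<forall>k. \<forall>x\<in>S. \<bar>phi k x\<bar> \<le> L * norm x"
proof -
  define X where "X = top_of_set S"
  define T where "T m = {x\<in>S. \<forall>k. \<bar>phi k x\<bar> \<le> real m}" for m :: nat
  have cont: "continuous_on S (phi k)" for k
    using bd[of k] lin[of k] lin_cont by metis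
  have closedT: "closedin X (T m)" for m
  proof -
    define G where "G k = S \<inter> phi k -` {-real m..real m}" for k
    have eq: "T m = \<Inter> (range G)"
      unfolding T_def G_def by (auto simp: abs_le_iff; smt (verit))
    have "closedin X (G k)" for k
      unfolding X_def G_def by (intro continuous_closedin_preimage cont) auto
    then have "closedin X (\<Inter> (range G))" by (intro closedin_Inter) auto
    then show ?thesis using eq by simp
  qed
  have cms: "completely_metrizable_space X"
    unfolding X_def
    using completely_metrizable_space_closedin[OF cms_linf, of S]
      S(2) closed_closedin by blast
  have top: "topspace X = S" unfolding X_def by simp
  have UT: "\<Union> (range T) = S"
  proof
    show "\<Union> (range T) \<subseteq> S" unfolding T_def by auto
    show "S \<subseteq> \<Union> (range T)"
    proof
      fix x assume x: "x \<in> S"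
      obtain B where B: "\<And>k. \<bar>phi k x\<bar> \<le> B" using pw[OF x] by auto
      have "x \<in> T (nat \<lceil>B\<rceil>)" unfolding T_def using x B
        by (auto intro: order_trans[OF _ real_nat_ceiling_ge])
      then show "x \<in> \<Union> (range T)" by auto
    qed
  qed
  have "0 \<in> S" using S(1) by (simp add: subspace_0)
  have "\<exists>m. X interior_of T m \<noteq> {}"
  proof (rule ccontr)
    assume "\<not> ?thesis"
    then have "X interior_of \<Union> (range T) = {}"
      using cms closedT by (intro Baire_category_alt) auto
    then show False using UT top \<open>0 \<in> S\<close> by (metis empty_iff interior_of_topspace)
  qed
  then obtain m x0 where x0: "x0 \<in> X interior_of T m" by auto
  have "openin X (X interior_of T m)" by simp
  then obtain r where r: "r > 0" "\<And>x'. x' \<in> S \<Longrightarrow> dist x' x0 < r \<Longrightarrow> x' \<in> X interior_of T m"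
    using x0 unfolding X_def openin_euclidean_subtopology_iff by blast
  have intT: "X interior_of T m \<subseteq> T m" by (rule interior_of_subset)
  have x0T: "x0 \<in> T m" using x0 intT by auto
  then have x0S: "x0 \<in> S" unfolding T_def by auto
  define L where "L = 4 * real m / r + 1"
  have "\<forall>k. \<forall>x\<in>S. \<bar>phi k x\<bar> \<le> L * norm x"
  proof (intro allI ballI)
    fix k x assume x: "x \<in> S"
    show "\<bar>phi k x\<bar> \<le> L * norm x"
    proof (cases "x = 0")
      case True then show ?thesis using lin_on.zero[OF lin] by simp
    next
      case False
      then have nx: "norm x > 0" by simp
      define c where "c = r / (2 * norm x)"
      have c: "c > 0" unfolding c_def using r nx by simp
      define y where "y = x0 + c *\<^sub>R x"
      have cxS: "c *\<^sub>R x \<in> S" using S(1) x by (simp add: subspace_scale)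
      have yS: "y \<in> S" unfolding y_def using S(1) x0S cxS by (simp add: subspace_add)
      have "dist y x0 = c * norm x" unfolding y_def dist_norm using c by simp
      also have "\<dots> = r / 2" unfolding c_def using nx by simp
      finally have "dist y x0 < r" using r by simp
      then have "y \<in> T m" using r(2)[OF yS] intT by auto
      then have "\<bar>phi k y\<bar> \<le> real m" unfolding T_def by auto
      moreover have "\<bar>phi k x0\<bar> \<le> real m" using x0T unfolding T_def by auto
      moreover have "phi k y = phi k x0 + c * phi k x"
        unfolding y_def using lin_on.add[OF lin x0S cxS] lin_on.scal[OF lin x] by simp
      ultimately have "c * \<bar>phi k x\<bar> \<le> 2 * real m" using c by (simp add: abs_mult)
      then have "\<bar>phi k x\<bar> \<le> 2 * real m / c" using c by (simp add: field_simps)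
      also have "\<dots> = 4 * real m / r * norm x" unfolding c_def using r nx by (simp add: field_simps)
      also have "\<dots> \<le> L * norm x" unfolding L_def using nx by (simp add: distrib_right)
      finally show ?thesis .
    qed
  qed
  moreover have "L > 0"
  proof -
    have "4 * real m / r \<ge> 0" using r by simp
    then show ?thesis unfolding L_def by linarith
  qed
  ultimately show ?thesis by blast
qed



lemma uncountable_fun_bool: "uncountable (UNIV :: (nat \<Rightarrow> bool) set)"
proof
  assume "countable (UNIV :: (nat \<Rightarrow> bool) set)"
  then obtain g :: "nat \<Rightarrow> (nat \<Rightarrow> bool)" where g: "range g = UNIV"
    using uncountable_def by blast
  define h where "h n = (\<not> g n n)" for n
  obtain i where "g i = h" using g by (metis UNIV_I imageE)
  then show False unfolding h_def by (metis)
qed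

definition Af :: "(nat \<Rightarrow> bool) \<Rightarrow> nat set" where
  "Af f = range (\<lambda>m. to_nat (map f [0..<m]))"

lemma Af_infinite: "infinite (Af f)"
proof -
  have "inj (\<lambda>m. to_nat (map f [0..<m]))"
  proof (rule injI)
    fix m m' assume "to_nat (map f [0..<m]) = to_nat (map f [0..<m'])"
    then have "map f [0..<m] = map f [0..<m']" by simp
    then have "length (map f [0..<m]) = length (map f [0..<m'])" by simp
    then show "m = m'" by simp
  qed
  then show ?thesis unfolding Af_def using range_inj_infinite by blast
qed

lemma Af_almost_disjoint:
  assumes "f \<noteq> g"
  shows "finite (Af f \<inter> Af g)"
proof -
  obtain i where i: "f i \<noteq> g i" using assms by auto
  have "Af f \<inter> Af g \<subseteq> (\<lambda>m. to_nat (map f [0..<m])) ` {..i}"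
  proof
    fix y assume yy: "y \<in> Af f \<inter> Af g"
    obtain m where y1: "y = to_nat (map f [0..<m])" using yy unfolding Af_def by blast
    obtain m' where y2: "y = to_nat (map g [0..<m'])" using yy unfolding Af_def by blast
    note y = y1 y2
    then have eq: "map f [0..<m] = map g [0..<m']" by simp
    then have "m = m'" by (metis length_map length_upt minus_nat.diff_0)
    have "m \<le> i"
    proof (rule ccontr)
      assume "\<not> m \<le> i"
      then have "i < m" by simp
      then have "map f [0..<m] ! i = map g [0..<m'] ! i" using eq by simp
      then show False using \<open>i < m\<close> \<open>m = m'\<close> i by simp
    qed
    then show "y \<in> (\<lambda>m. to_nat (map f [0..<m])) ` {..i}" using y by auto
  qed
  then show ?thesis by (rule finite_subset) auto
qed

lemma spread:
  fixes x :: "'a \<Rightarrow> real"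
  assumes T: "infinite T" and B: "\<And>t. t \<in> T \<Longrightarrow> \<bar>x t\<bar> \<le> B" and g: "\<gamma> > 0"
    and m: "m \<ge> 1" "real m * \<gamma> / 4 \<ge> C"
    and cnt: "\<And>P Q. P \<subseteq> T \<Longrightarrow> Q \<subseteq> T \<Longrightarrow> finite P \<Longrightarrow> finite Q \<Longrightarrow> P \<inter> Q = {} \<Longrightarrow>
        card P = m \<Longrightarrow> card Q = m \<Longrightarrow> (\<Sum>p\<in>P. x p) - (\<Sum>q\<in>Q. x q) \<le> C"
  shows "\<exists>F. finite F \<and> (\<forall>t\<in>T - F. \<forall>t'\<in>T - F. \<bar>x t - x t'\<bar> \<le> \<gamma>)"
proof -
  define Y where "Y = {y. infinite {t\<in>T. y < x t}}"
  have Ymem: "- B - 1 \<in> Y"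
  proof -
    have "{t\<in>T. - B - 1 < x t} = T" using B by (force simp: abs_le_iff)
    then show ?thesis unfolding Y_def using T by simp
  qed
  have Ybd: "y \<le> B" if "y \<in> Y" for y
  proof (rule ccontr)
    assume "\<not> y \<le> B"
    then have e: "{t\<in>T. y < x t} = {}" using B by (force simp: abs_le_iff)
    have "infinite {t\<in>T. y < x t}" using that unfolding Y_def by simp
    then show False unfolding e by simp
  qed
  have bdd: "bdd_above Y" using Ybd by (auto simp: bdd_above_def)
  define c where "c = Sup Y"
  have F1: "finite {t\<in>T. c + \<gamma>/2 < x t}"
  proof (rule ccontr)
    assume "infinite {t\<in>T. c + \<gamma>/2 < x t}"
    then have "c + \<gamma>/2 \<in> Y" unfolding Y_def by simp
    then have "c + \<gamma>/2 \<le> c" unfolding c_def using bdd by (rule cSup_upper)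
    then show False using g by simp
  qed
  have I2: "infinite {t\<in>T. c - \<gamma>/4 < x t}"
  proof -
    have "c - \<gamma>/4 < Sup Y" unfolding c_def using g by simp
    then obtain y where y: "y \<in> Y" "c - \<gamma>/4 < y" using Ymem bdd
      by (metis empty_iff less_cSup_iff)
    then have "{t\<in>T. y < x t} \<subseteq> {t\<in>T. c - \<gamma>/4 < x t}" by auto
    moreover have "infinite {t\<in>T. y < x t}" using y unfolding Y_def by simp
    ultimately show ?thesis using finite_subset by blast
  qed
  have F3: "finite {t\<in>T. x t < c - \<gamma>/2}"
  proof (rule ccontr)
    assume "infinite {t\<in>T. x t < c - \<gamma>/2}"
    then obtain Q where Q: "Q \<subseteq> {t\<in>T. x t < c - \<gamma>/2}" "finite Q" "card Q = m"
      using infinite_arbitrarily_large by blast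
    obtain P where P: "P \<subseteq> {t\<in>T. c - \<gamma>/4 < x t}" "finite P" "card P = m"
      using I2 infinite_arbitrarily_large by blast
    have disj: "P \<inter> Q = {}" using P(1) Q(1) g by force
    have Pne: "P \<noteq> {}" "Q \<noteq> {}" using P(3) Q(3) m(1) by auto
    have "(\<Sum>p\<in>P. c - \<gamma>/4) < (\<Sum>p\<in>P. x p)"
      using P Pne by (intro sum_strict_mono) auto
    then have h1: "real m * (c - \<gamma>/4) < (\<Sum>p\<in>P. x p)" using P(3) by simp
    have "(\<Sum>q\<in>Q. x q) < (\<Sum>q\<in>Q. c - \<gamma>/2)"
      using Q Pne by (intro sum_strict_mono) auto
    then have h2: "(\<Sum>q\<in>Q. x q) < real m * (c - \<gamma>/2)" using Q(3) by simp
    have "real m * (c - \<gamma>/4) - real m * (c - \<gamma>/2) < (\<Sum>p\<in>P. x p) - (\<Sum>q\<in>Q. x q)"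
      using diff_strict_mono[OF h1 h2] .
    also have "\<dots> \<le> C" using cnt[OF _ _ P(2) Q(2) disj P(3) Q(3)] P(1) Q(1) by auto
    finally have "real m * \<gamma> / 4 < C" by (simp add: algebra_simps)
    then show False using m(2) by simp
  qed
  define F where "F = {t\<in>T. c + \<gamma>/2 < x t} \<union> {t\<in>T. x t < c - \<gamma>/2}"
  have "finite F" unfolding F_def using F1 F3 by simp
  moreover have "\<forall>t\<in>T - F. \<forall>t'\<in>T - F. \<bar>x t - x t'\<bar> \<le> \<gamma>"
    unfolding F_def by (auto simp: abs_le_iff)
  ultimately show ?thesis by blast
qed



definition blk :: "(nat \<Rightarrow> nat) \<Rightarrow> nat \<Rightarrow> nat" where
  "blk b n = (LEAST j. n < b (Suc j))"

lemma blk_props: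
  assumes "strict_mono b" "b 0 = 0"
  shows "b (blk b n) \<le> n" "n < b (Suc (blk b n))"
proof -
  have ex: "n < b (Suc n)" using seq_suble[OF assms(1), of "Suc n"] by simp
  show "n < b (Suc (blk b n))" unfolding blk_def by (rule LeastI[of _ n]) (rule ex)
  show "b (blk b n) \<le> n"
  proof (cases "blk b n")
    case 0 then show ?thesis using assms(2) by simp
  next
    case (Suc i)
    then have "i < blk b n" by simp
    then have "\<not> n < b (Suc i)" unfolding blk_def by (rule not_less_Least)
    then show ?thesis using Suc by simp
  qed
qed

lemma blk_eq:
  assumes "strict_mono b" "b j \<le> n" "n < b (Suc j)"
  shows "blk b n = j"
  unfolding blk_def
proof (rule Least_equality)
  show "n < b (Suc j)" by fact
  fix y assume y: "n < b (Suc y)"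
  show "j \<le> y"
  proof (rule ccontr)
    assume "\<not> j \<le> y"
    then have "Suc y \<le> j" by simp
    then have "b (Suc y) \<le> b j" using assms(1) by (simp add: strict_mono_less_eq)
    then show False using y assms(2) by simp
  qed
qed

lemma blk_fin:
  assumes "strict_mono b" "b 0 = 0"
  shows "finite {n. blk b n = j}"
proof -
  have "{n. blk b n = j} \<subseteq> {..<b (Suc j)}" using blk_props[OF assms] by auto
  then show ?thesis by (rule finite_subset) auto
qed

definition wv :: "(nat \<Rightarrow> real) \<Rightarrow> (nat \<Rightarrow> nat) \<Rightarrow> nat set \<Rightarrow> linf" where
  "wv z \<beta> A = Bcontfun (\<lambda>n. if \<beta> n \<in> A then z n else 0)"

lemma wv_apply:
  assumes "\<And>n. \<bar>z n\<bar> \<le> 1"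
  shows "apply_bcontfun (wv z \<beta> A) n = (if \<beta> n \<in> A then z n else 0)"
  unfolding wv_def by (subst bc_apply[where B=1]) (use assms in auto)

lemma wv_norm:
  assumes "\<And>n. \<bar>z n\<bar> \<le> 1"
  shows "norm (wv z \<beta> A) \<le> 1"
  by (rule norm_le_bc) (use assms in \<open>auto simp: wv_apply\<close>)

locale core =
  fixes S :: "linf set" and phi :: "nat \<Rightarrow> linf \<Rightarrow> real" and L :: real
  assumes S: "subspace S" and Sc: "closed S" and c0S: "c0 \<subseteq> S"
    and lin: "\<And>k. lin_on S (phi k)"
    and Lpos: "L > 0" and bnd: "\<And>k x. x \<in> S \<Longrightarrow> \<bar>phi k x\<bar> \<le> L * norm x"
    and conv: "\<And>x. x \<in> S \<Longrightarrow> (\<lambda>k. phi k x) \<longlonglongrightarrow> 0"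
begin

lemma bf: "bfun S (phi k) L"
  using lin[of k] c0S Lpos bnd unfolding bfun_def bfun_axioms_def by auto

lemma count:
  assumes z: "\<And>n. \<bar>z n\<bar> \<le> 1" and b: "strict_mono b" "b 0 = 0"
    and ss: "\<And>f. f \<in> T \<Longrightarrow> ss f \<in> S \<and> norm (wv z (blk b) (Af f) - d - ss f) < \<epsilon>"
    and PQ: "P \<subseteq> T" "Q \<subseteq> T" "finite P" "finite Q" "P \<inter> Q = {}" "card P = m" "card Q = m"
  shows "(\<Sum>p\<in>P. lamf (phi k) (ss p)) - (\<Sum>q\<in>Q. lamf (phi k) (ss q)) \<le> 2 * L * (1 + 2 * real m * \<epsilon>)"
proof -
  interpret bfun S "phi k" L by (rule bf)
  interpret lm: lin_on S "lamf (phi k)" by (rule lam_lin)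
  define w where "w f = wv z (blk b) (Af f)" for f
  define v where "v = (\<Sum>p\<in>P. ss p) - (\<Sum>q\<in>Q. ss q)"
  define Wv where "Wv = (\<Sum>p\<in>P. w p) - (\<Sum>q\<in>Q. w q)"
  have ssS: "ss f \<in> S" if "f \<in> T" for f using ss[OF that] by simp
  have vS: "v \<in> S" unfolding v_def using PQ ssS S
    by (intro subspace_diff subspace_sum) auto
  have lamv: "lamf (phi k) v = (\<Sum>p\<in>P. lamf (phi k) (ss p)) - (\<Sum>q\<in>Q. lamf (phi k) (ss q))"
  proof -
    have "lamf (phi k) (sum ss P) = (\<Sum>p\<in>P. lamf (phi k) (ss p))"
      by (rule lm.sum) (use PQ ssS in auto)
    moreover have "lamf (phi k) (sum ss Q) = (\<Sum>p\<in>Q. lamf (phi k) (ss p))"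
      by (rule lm.sum) (use PQ ssS in auto)
    moreover have "sum ss P \<in> S" "sum ss Q \<in> S" using PQ ssS S by (auto intro!: subspace_sum)
    ultimately show ?thesis unfolding v_def by (simp add: lm.diff)
  qed
  have vW: "norm (v - Wv) \<le> 2 * real m * \<epsilon>"
  proof -
    have eq: "v - Wv = (\<Sum>p\<in>P. ss p + d - w p) - (\<Sum>q\<in>Q. ss q + d - w q)"
      unfolding v_def Wv_def using PQ by (simp add: sum.distrib sum_subtractf sum_constant_scaleR)
    have "norm (v - Wv) \<le> (\<Sum>p\<in>P. norm (ss p + d - w p)) + (\<Sum>q\<in>Q. norm (ss q + d - w q))"
      unfolding eq by (rule order_trans[OF norm_triangle_ineq4 add_mono[OF norm_sum norm_sum]])
    also have "\<dots> \<le> (\<Sum>p\<in>P. \<epsilon>) + (\<Sum>q\<in>Q. \<epsilon>)"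
    proof (intro add_mono sum_mono)
      fix p assume "p \<in> P"
      then have "norm (w p - d - ss p) < \<epsilon>" using ss PQ unfolding w_def by auto
      then show "norm (ss p + d - w p) \<le> \<epsilon>" by (simp add: norm_minus_commute algebra_simps)
    next
      fix q assume "q \<in> Q"
      then have "norm (w q - d - ss q) < \<epsilon>" using ss PQ unfolding w_def by auto
      then show "norm (ss q + d - w q) \<le> \<epsilon>" by (simp add: norm_minus_commute algebra_simps)
    qed
    also have "\<dots> = 2 * real m * \<epsilon>" using PQ by simp
    finally show ?thesis .
  qed
  define R where "R = P \<union> Q"
  define Eb where "Eb = (\<Union>p\<in>R. \<Union>q\<in>R - {p}. Af p \<inter> Af q)"
  have Ebf: "finite Eb" unfolding Eb_def
  proof (intro finite_UN_I)
    show "finite R" unfolding R_def using PQ by simp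
    fix p assume "p \<in> R"
    show "finite (R - {p})" unfolding R_def using PQ by simp
    fix q assume "q \<in> R - {p}"
    then show "finite (Af p \<inter> Af q)" by (intro Af_almost_disjoint) auto
  qed
  define E where "E = (\<Union>j\<in>Eb. {n. blk b n = j})"
  have Ef: "finite E" unfolding E_def using Ebf blk_fin[OF b] by auto
  define v' where "v' = v - trunc E v"
  have v'S: "v' \<in> S" unfolding v'_def using vS trunc_c0[OF Ef] c0S S by (auto intro: subspace_diff)
  have "lamf (phi k) (trunc E v) = 0"
    by (rule lam_finsupp[OF Ef]) (simp add: trunc_apply)
  then have lamv': "lamf (phi k) v' = lamf (phi k) v"
    unfolding v'_def using vS trunc_c0[OF Ef] c0S by (subst lm.diff) auto
  have Wvb: "\<bar>apply_bcontfun Wv n\<bar> \<le> 1" if n: "n \<notin> E" for n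
  proof -
    define RR where "RR = {p\<in>R. blk b n \<in> Af p}"
    have fR: "finite R" unfolding R_def using PQ by simp
    have "card RR \<le> Suc 0"
    proof (subst card_le_Suc0_iff_eq)
      show "finite RR" unfolding RR_def using fR by simp
      show "\<forall>x\<in>RR. \<forall>y\<in>RR. x = y"
      proof (intro ballI, rule ccontr)
        fix x y assume xy: "x \<in> RR" "y \<in> RR" "x \<noteq> y"
        then have "blk b n \<in> Eb" unfolding RR_def Eb_def by blast
        then show False using n unfolding E_def by auto
      qed
    qed
    have fRR: "finite RR" unfolding RR_def using fR by simp
    have wa: "apply_bcontfun (w f) n = (if blk b n \<in> Af f then z n else 0)" for f
      unfolding w_def by (rule wv_apply[OF z])
    have sP: "(\<Sum>p\<in>P. apply_bcontfun (w p) n) = real (card (P \<inter> RR)) * z n"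
    proof -
      have "(\<Sum>p\<in>P. apply_bcontfun (w p) n) = (\<Sum>p\<in>P. if p \<in> RR then z n else 0)"
        unfolding wa RR_def R_def by (intro sum.cong) auto
      also have "\<dots> = real (card (P \<inter> RR)) * z n" using PQ by (simp add: sum.If_cases)
      finally show ?thesis .
    qed
    have sQ: "(\<Sum>q\<in>Q. apply_bcontfun (w q) n) = real (card (Q \<inter> RR)) * z n"
    proof -
      have "(\<Sum>q\<in>Q. apply_bcontfun (w q) n) = (\<Sum>q\<in>Q. if q \<in> RR then z n else 0)"
        unfolding wa RR_def R_def by (intro sum.cong) auto
      also have "\<dots> = real (card (Q \<inter> RR)) * z n" using PQ by (simp add: sum.If_cases)
      finally show ?thesis .
    qed
    have c1: "card (P \<inter> RR) \<le> 1" "card (Q \<inter> RR) \<le> 1"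
      using \<open>card RR \<le> Suc 0\<close> card_mono[OF fRR, of "P \<inter> RR"] card_mono[OF fRR, of "Q \<inter> RR"] by auto
    have "\<bar>real (card (P \<inter> RR)) - real (card (Q \<inter> RR))\<bar> \<le> 1" using c1 by auto
    then have "\<bar>(real (card (P \<inter> RR)) - real (card (Q \<inter> RR))) * z n\<bar> \<le> 1 * 1"
      unfolding abs_mult using z[of n] by (intro mult_mono) auto
    then show ?thesis unfolding Wv_def by (simp add: apply_sum sP sQ left_diff_distrib)
  qed
  have nv': "norm v' \<le> 1 + 2 * real m * \<epsilon>"
  proof (rule norm_le_bc)
    fix n
    show "\<bar>apply_bcontfun v' n\<bar> \<le> 1 + 2 * real m * \<epsilon>"
    proof (cases "n \<in> E")
      case True
      then have "apply_bcontfun v' n = 0" unfolding v'_def by (simp add: trunc_apply)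
      moreover have "0 \<le> 2 * real m * \<epsilon>" using vW norm_ge_zero order_trans by blast
      ultimately show ?thesis by simp
    next
      case False
      then have "apply_bcontfun v' n = apply_bcontfun v n" unfolding v'_def by (simp add: trunc_apply)
      moreover have "\<bar>apply_bcontfun v n - apply_bcontfun Wv n\<bar> \<le> 2 * real m * \<epsilon>"
        using abs_apply_le[of "v - Wv" n] vW by simp
      ultimately show ?thesis using Wvb[OF False] by linarith
    qed
  qed
  have "(\<Sum>p\<in>P. lamf (phi k) (ss p)) - (\<Sum>q\<in>Q. lamf (phi k) (ss q)) = lamf (phi k) v'"
    using lamv lamv' by simp
  also have "\<dots> \<le> 2 * L * norm v'" using lam_bound[OF v'S] by simp
  also have "\<dots> \<le> 2 * L * (1 + 2 * real m * \<epsilon>)" using nv' Lpos by (simp add: mult_left_mono)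
  finally show ?thesis .
qed

end



context core
begin

lemma coef_lim: "(\<lambda>k. coef (phi k) n) \<longlonglongrightarrow> 0"
  unfolding coef_def using conv[OF bfun.unitvec_S[OF bf]] .

lemma l1s: "summable (\<lambda>n. \<bar>coef (phi k) n\<bar>)"
  using bfun.l1_summable[OF bf] .

lemma hump:
  assumes d: "\<delta> > 0" and inf: "\<And>K. \<exists>k\<ge>K. \<delta> \<le> (\<Sum>n. \<bar>coef (phi k) n\<bar>)" and e: "\<eta> > 0"
  shows "\<exists>k b. strict_mono k \<and> strict_mono b \<and> b 0 = 0 \<and>
    (\<forall>j. (\<Sum>n<b j. \<bar>coef (phi (k j)) n\<bar>) < \<eta> \<and> \<delta> \<le> (\<Sum>n. \<bar>coef (phi (k j)) n\<bar>) \<and>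
         (\<Sum>n. \<bar>coef (phi (k j)) n\<bar>) - (\<Sum>n<b (Suc j). \<bar>coef (phi (k j)) n\<bar>) < \<eta>)"
proof -
  define Pr where "Pr p p' \<longleftrightarrow> fst p' > fst p \<and> snd p' > snd p \<and>
     (\<Sum>n<snd p. \<bar>coef (phi (fst p')) n\<bar>) < \<eta> \<and> \<delta> \<le> (\<Sum>n. \<bar>coef (phi (fst p')) n\<bar>) \<and>
     (\<Sum>n. \<bar>coef (phi (fst p')) n\<bar>) - (\<Sum>n<snd p'. \<bar>coef (phi (fst p')) n\<bar>) < \<eta>" for p p' :: "nat \<times> nat"
  have step: "\<exists>p'. Pr p p'" for p
  proof -
    obtain kp q where p: "p = (kp, q)" by force
    have "(\<lambda>k. \<Sum>n<q. \<bar>coef (phi k) n\<bar>) \<longlonglongrightarrow> (\<Sum>n<q. 0)"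
      by (intro tendsto_sum tendsto_rabs_zero coef_lim)
    then obtain K0 where K0: "\<And>k. k \<ge> K0 \<Longrightarrow> (\<Sum>n<q. \<bar>coef (phi k) n\<bar>) < \<eta>"
      using e unfolding LIMSEQ_iff by force
    obtain k' where k': "k' \<ge> max K0 (Suc kp)" "\<delta> \<le> (\<Sum>n. \<bar>coef (phi k') n\<bar>)" using inf by blast
    have "(\<lambda>n. \<Sum>i<n. \<bar>coef (phi k') i\<bar>) \<longlonglongrightarrow> (\<Sum>n. \<bar>coef (phi k') n\<bar>)"
      by (rule summable_LIMSEQ[OF l1s])
    then obtain Q0 where Q0: "\<And>n. n \<ge> Q0 \<Longrightarrow> \<bar>(\<Sum>i<n. \<bar>coef (phi k') i\<bar>) - (\<Sum>n. \<bar>coef (phi k') n\<bar>)\<bar> < \<eta>"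
      using e unfolding LIMSEQ_iff by force
    define q' where "q' = max Q0 (Suc q)"
    have "Pr p (k', q')" unfolding Pr_def p q'_def using k' K0[of k'] Q0[of "max Q0 (Suc q)"]
      by (auto simp: abs_less_iff)
    then show ?thesis by blast
  qed
  then obtain st where st: "\<And>p. Pr p (st p)" by metis
  define G where "G j = (st ^^ j) (0, 0)" for j
  have GS: "G (Suc j) = st (G j)" for j unfolding G_def by simp
  define k where "k j = fst (G (Suc j))" for j
  define b where "b j = snd (G j)" for j
  have PG: "Pr (G j) (G (Suc j))" for j unfolding GS by (rule st)
  have "strict_mono k"
  proof (rule strict_monoI_Suc)
    fix j show "k j < k (Suc j)" using PG[of "Suc j"] unfolding k_def Pr_def by simp
  qed
  moreover have "strict_mono b"
  proof (rule strict_monoI_Suc)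
    fix j show "b j < b (Suc j)" using PG[of j] unfolding b_def Pr_def by simp
  qed
  moreover have "b 0 = 0" unfolding b_def G_def by simp
  moreover have "\<forall>j. (\<Sum>n<b j. \<bar>coef (phi (k j)) n\<bar>) < \<eta> \<and> \<delta> \<le> (\<Sum>n. \<bar>coef (phi (k j)) n\<bar>) \<and>
         (\<Sum>n. \<bar>coef (phi (k j)) n\<bar>) - (\<Sum>n<b (Suc j). \<bar>coef (phi (k j)) n\<bar>) < \<eta>"
    using PG unfolding Pr_def k_def b_def by simp
  ultimately show ?thesis by blast
qed

lemma block_est:
  fixes u :: linf and kk :: nat
  defines "a \<equiv> coef (phi kk)"
  assumes d: "\<delta> > 0" and e: "0 \<le> \<epsilon>" "\<epsilon> \<le> 1/20" and q: "qa \<le> qb"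
    and H1: "(\<Sum>n<qa. \<bar>a n\<bar>) < \<delta>/10"
    and H3: "\<delta> \<le> (\<Sum>n. \<bar>a n\<bar>)"
    and H2: "(\<Sum>n. \<bar>a n\<bar>) - (\<Sum>n<qb. \<bar>a n\<bar>) < \<delta>/10"
    and ub: "\<And>n. \<bar>apply_bcontfun u n\<bar> \<le> 1 + 2 * \<epsilon>"
    and blk: "\<And>n. qa \<le> n \<Longrightarrow> n < qb \<Longrightarrow> \<bar>apply_bcontfun u n - sgn (a n)\<bar> \<le> 2 * \<epsilon>"
  shows "pr a u \<ge> \<delta> / 2"
proof -
  have sa: "summable (\<lambda>n. \<bar>a n\<bar>)" unfolding a_def by (rule l1s)
  define g where "g n = apply_bcontfun u n * a n" for n
  have sg: "summable g" unfolding g_def by (rule pr_summable(2)[OF sa])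
  have prs: "pr a u = (\<Sum>n. g (n + qb)) + (\<Sum>n<qb. g n)"
    unfolding pr_def g_def[symmetric] by (rule suminf_split_initial_segment[OF sg])
  have Na: "(\<Sum>n. \<bar>a n\<bar>) = (\<Sum>n. \<bar>a (n + qb)\<bar>) + (\<Sum>n<qb. \<bar>a n\<bar>)"
    by (rule suminf_split_initial_segment[OF sa])
  have gle: "\<bar>g n\<bar> \<le> (1 + 2 * \<epsilon>) * \<bar>a n\<bar>" for n
    unfolding g_def abs_mult using ub[of n] by (intro mult_right_mono) auto
  have tail: "\<bar>\<Sum>n. g (n + qb)\<bar> \<le> (1 + 2 * \<epsilon>) * (\<delta>/10)"
  proof -
    have sa': "summable (\<lambda>n. \<bar>a (n + qb)\<bar>)" using summable_iff_shift[of "\<lambda>n. \<bar>a n\<bar>" qb] sa by simp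
    have s1: "summable (\<lambda>n. \<bar>g (n + qb)\<bar>)"
      using sa' by (intro summable_rabs_comparison_test[where g="\<lambda>n. (1 + 2 * \<epsilon>) * \<bar>a (n + qb)\<bar>"])
                  (auto intro: gle summable_mult)
    have "\<bar>\<Sum>n. g (n + qb)\<bar> \<le> (\<Sum>n. \<bar>g (n + qb)\<bar>)" by (rule summable_rabs[OF s1])
    also have "\<dots> \<le> (\<Sum>n. (1 + 2 * \<epsilon>) * \<bar>a (n + qb)\<bar>)"
      using s1 sa' by (intro suminf_le gle summable_mult) auto
    also have "\<dots> = (1 + 2 * \<epsilon>) * (\<Sum>n. \<bar>a (n + qb)\<bar>)"
    proof -
      have "summable (\<lambda>n. \<bar>a (n + qb)\<bar>)" using summable_iff_shift[of "\<lambda>n. \<bar>a n\<bar>" qb] sa by simp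
      then show ?thesis by (rule suminf_mult)
    qed
    also have "\<dots> \<le> (1 + 2 * \<epsilon>) * (\<delta>/10)"
      using Na H2 e by (intro mult_left_mono) auto
    finally show ?thesis .
  qed
  have split: "(\<Sum>n<qb. g n) = (\<Sum>n<qa. g n) + (\<Sum>n\<in>{qa..<qb}. g n)"
    using q by (simp add: atLeast0LessThan[symmetric] sum.atLeastLessThan_concat)
  have splita: "(\<Sum>n<qb. \<bar>a n\<bar>) = (\<Sum>n<qa. \<bar>a n\<bar>) + (\<Sum>n\<in>{qa..<qb}. \<bar>a n\<bar>)"
    using q by (simp add: atLeast0LessThan[symmetric] sum.atLeastLessThan_concat)
  have head: "\<bar>\<Sum>n<qa. g n\<bar> \<le> (1 + 2 * \<epsilon>) * (\<delta>/10)"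
  proof -
    have "\<bar>\<Sum>n<qa. g n\<bar> \<le> (\<Sum>n<qa. \<bar>g n\<bar>)" by (rule sum_abs)
    also have "\<dots> \<le> (\<Sum>n<qa. (1 + 2 * \<epsilon>) * \<bar>a n\<bar>)" by (intro sum_mono gle)
    also have "\<dots> = (1 + 2 * \<epsilon>) * (\<Sum>n<qa. \<bar>a n\<bar>)" by (simp add: sum_distrib_left)
    also have "\<dots> \<le> (1 + 2 * \<epsilon>) * (\<delta>/10)" using H1 e by (intro mult_left_mono) auto
    finally show ?thesis .
  qed
  have blkest: "(\<Sum>n\<in>{qa..<qb}. g n) \<ge> (1 - 2 * \<epsilon>) * (\<Sum>n\<in>{qa..<qb}. \<bar>a n\<bar>)"
  proof -
    have "(1 - 2 * \<epsilon>) * \<bar>a n\<bar> \<le> g n" if "n \<in> {qa..<qb}" for n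
    proof -
      have sg1: "sgn (a n) * a n = \<bar>a n\<bar>" by (simp add: sgn_if)
      have "\<bar>(apply_bcontfun u n - sgn (a n)) * a n\<bar> \<le> 2 * \<epsilon> * \<bar>a n\<bar>"
        unfolding abs_mult using blk[of n] that by (intro mult_right_mono) auto
      moreover have "g n = \<bar>a n\<bar> + (apply_bcontfun u n - sgn (a n)) * a n"
        unfolding g_def using sg1 by (simp add: algebra_simps)
      ultimately have "g n \<ge> \<bar>a n\<bar> - 2 * \<epsilon> * \<bar>a n\<bar>" by (simp only: abs_le_iff) linarith
      moreover have "(1 - 2 * \<epsilon>) * \<bar>a n\<bar> = \<bar>a n\<bar> - 2 * \<epsilon> * \<bar>a n\<bar>" by (simp add: algebra_simps)
      ultimately show ?thesis by linarith
    qed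
    then have "(\<Sum>n\<in>{qa..<qb}. (1 - 2 * \<epsilon>) * \<bar>a n\<bar>) \<le> (\<Sum>n\<in>{qa..<qb}. g n)" by (intro sum_mono) auto
    then show ?thesis by (simp add: sum_distrib_left)
  qed
  have bmass: "(\<Sum>n\<in>{qa..<qb}. \<bar>a n\<bar>) \<ge> 4 * \<delta> / 5" using splita H1 H2 H3 by linarith
  have c1: "(1 - 2 * \<epsilon>) * (\<Sum>n\<in>{qa..<qb}. \<bar>a n\<bar>) \<ge> (9/10) * (4 * \<delta> / 5)"
  proof -
    have "(9/10) * (4 * \<delta> / 5) \<le> (9/10) * (\<Sum>n\<in>{qa..<qb}. \<bar>a n\<bar>)" using bmass by simp
    also have "\<dots> \<le> (1 - 2 * \<epsilon>) * (\<Sum>n\<in>{qa..<qb}. \<bar>a n\<bar>)"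
      using e by (intro mult_right_mono) (auto intro: sum_nonneg)
    finally show ?thesis .
  qed
  have c2: "(1 + 2 * \<epsilon>) * (\<delta>/10) \<le> (11/10) * (\<delta>/10)" using e d by (intro mult_right_mono) auto
  have t1: "(\<Sum>n. g (n + qb)) \<ge> - ((1 + 2 * \<epsilon>) * (\<delta>/10))"
    using tail by (simp only: abs_le_iff) linarith
  have h1: "(\<Sum>n<qa. g n) \<ge> - ((1 + 2 * \<epsilon>) * (\<delta>/10))"
    using head by (simp only: abs_le_iff) linarith
  show ?thesis using prs split t1 h1 blkest c1 c2 by linarith
qed

end



context core
begin

lemma final:
  assumes sq: "separable_quotient S" and d: "\<delta> > 0"
    and k: "strict_mono k" and b: "strict_mono b" "b 0 = 0"
    and H: "\<And>j. (\<Sum>n<b j. \<bar>coef (phi (k j)) n\<bar>) < \<delta>/10 \<and> \<delta> \<le> (\<Sum>n. \<bar>coef (phi (k j)) n\<bar>) \<and>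
         (\<Sum>n. \<bar>coef (phi (k j)) n\<bar>) - (\<Sum>n<b (Suc j). \<bar>coef (phi (k j)) n\<bar>) < \<delta>/10"
  shows False
proof -
  obtain D where D: "countable D" "\<And>x e. e > 0 \<Longrightarrow> \<exists>d\<in>D. infdist (x - d) S < e"
    using sq unfolding separable_quotient_def by blast
  define z where "z n = sgn (coef (phi (k (blk b n))) n)" for n
  have z: "\<And>n. \<bar>z n\<bar> \<le> 1" unfolding z_def by (simp add: abs_sgn_eq)
  define w where "w A = wv z (blk b) A" for A
  define \<gamma> where "\<gamma> = \<delta>/10"
  define \<epsilon> where "\<epsilon> = min (1/20) (\<gamma> / (32 * L))"
  have gpos: "\<gamma> > 0" unfolding \<gamma>_def using d by simp
  have epos: "\<epsilon> > 0" unfolding \<epsilon>_def using gpos Lpos by simp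
  have e1: "\<epsilon> \<le> 1/20" unfolding \<epsilon>_def by simp
  have e2: "\<epsilon> \<le> \<gamma> / (32 * L)" unfolding \<epsilon>_def by simp
  have S0: "0 \<in> S" using S by (simp add: subspace_0)
  then have Sne: "S \<noteq> {}" by auto
  have approx: "\<exists>p. fst p \<in> D \<and> snd p \<in> S \<and> norm (w (Af f) - fst p - snd p) < \<epsilon>" for f
  proof -
    obtain d where dd: "d \<in> D" "infdist (w (Af f) - d) S < \<epsilon>" using D(2) epos by blast
    then have "(INF s\<in>S. dist (w (Af f) - d) s) < \<epsilon>" using infdist_notempty[OF Sne] by simp
    moreover have "bdd_below ((\<lambda>s. dist (w (Af f) - d) s) ` S)" by (rule bdd_belowI[of _ 0]) auto
    ultimately have "\<exists>s\<in>S. dist (w (Af f) - d) s < \<epsilon>"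
      using cINF_less_iff[OF Sne, of "\<lambda>s. dist (w (Af f) - d) s" \<epsilon>] by blast
    then obtain s where "s \<in> S" "dist (w (Af f) - d) s < \<epsilon>" by blast
    then show ?thesis using dd by (intro exI[of _ "(d, s)"]) (simp add: dist_norm)
  qed
  have "\<forall>f. \<exists>p. fst p \<in> D \<and> snd p \<in> S \<and> norm (w (Af f) - fst p - snd p) < \<epsilon>"
    using approx by blast
  then have "\<exists>pp. \<forall>f. fst (pp f) \<in> D \<and> snd (pp f) \<in> S \<and> norm (w (Af f) - fst (pp f) - snd (pp f)) < \<epsilon>"
    by (rule choice)
  then obtain pp where pp': "\<forall>f. fst (pp f) \<in> D \<and> snd (pp f) \<in> S \<and> norm (w (Af f) - fst (pp f) - snd (pp f)) < \<epsilon>"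
    by blast
  have pp: "\<And>f. fst (pp f) \<in> D \<and> snd (pp f) \<in> S \<and> norm (w (Af f) - fst (pp f) - snd (pp f)) < \<epsilon>"
    using pp' by blast
  define dd where "dd f = fst (pp f)" for f
  define ss where "ss f = snd (pp f)" for f
  have "\<exists>d0. uncountable {f. dd f = d0}"
  proof (rule ccontr)
    assume "\<not> ?thesis"
    then have c: "\<And>d0. countable {f. dd f = d0}" by auto
    have "UNIV = (\<Union>d0\<in>D. {f. dd f = d0})" using pp unfolding dd_def by auto
    moreover have "countable (\<Union>d0\<in>D. {f. dd f = d0})" using D(1) c by (intro countable_UN) auto
    ultimately show False using uncountable_fun_bool by simp
  qed
  then obtain d0 where Tu: "uncountable {f. dd f = d0}" by blast
  define T where "T = {f. dd f = d0}"
  have ssT: "\<And>f. f \<in> T \<Longrightarrow> ss f \<in> S \<and> norm (wv z (blk b) (Af f) - d0 - ss f) < \<epsilon>"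
    using pp unfolding T_def dd_def ss_def w_def by auto
  define m where "m = nat \<lceil>16 * L / \<gamma>\<rceil> + 1"
  have m1: "m \<ge> 1" unfolding m_def by simp
  have mC: "real m * \<gamma> / 4 \<ge> 2 * L * (1 + 2 * real m * \<epsilon>)"
  proof -
    have "16 * L / \<gamma> \<le> real m" unfolding m_def using real_nat_ceiling_ge[of "16 * L / \<gamma>"] by simp
    then have a1: "16 * L \<le> real m * \<gamma>" using gpos by (simp add: pos_divide_le_eq)
    have "\<epsilon> * (32 * L) \<le> \<gamma>" using e2 Lpos by (simp add: pos_le_divide_eq)
    then have a2: "real m * (\<epsilon> * (32 * L)) \<le> real m * \<gamma>" by (intro mult_left_mono) auto
    have "2 * L * (1 + 2 * real m * \<epsilon>) = 2 * L + real m * (\<epsilon> * (32 * L)) / 8" by (simp add: algebra_simps)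
    then show ?thesis using a1 a2 by linarith
  qed
  have Bnd: "\<bar>lamf (phi (k j)) (ss f)\<bar> \<le> 2 * L * (2 + norm d0)" if f: "f \<in> T" for j f
  proof -
    interpret bfun S "phi (k j)" L by (rule bf)
    have "ss f = w (Af f) - d0 - (w (Af f) - d0 - ss f)" by simp
    then have "norm (ss f) \<le> norm (w (Af f) - d0) + norm (w (Af f) - d0 - ss f)"
      using norm_triangle_ineq4[of "w (Af f) - d0" "w (Af f) - d0 - ss f"] by simp
    moreover have "norm (w (Af f) - d0) \<le> norm (w (Af f)) + norm d0" by (rule norm_triangle_ineq4)
    ultimately have "norm (ss f) \<le> norm (w (Af f)) + norm d0 + norm (w (Af f) - d0 - ss f)" by linarith
    moreover have "norm (w (Af f)) \<le> 1" unfolding w_def by (rule wv_norm[OF z])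
    moreover have "norm (wv z (blk b) (Af f) - d0 - ss f) < \<epsilon>" using ssT[OF f] by simp
    ultimately have "norm (ss f) \<le> 2 + norm d0" using e1 unfolding w_def by linarith
    then have "2 * L * norm (ss f) \<le> 2 * L * (2 + norm d0)" using Lpos by (intro mult_left_mono) auto
    then show ?thesis using lam_bound[of "ss f"] ssT[OF f] by linarith
  qed
  have Fex: "\<exists>F. finite F \<and> (\<forall>t\<in>T - F. \<forall>t'\<in>T - F.
      \<bar>lamf (phi (k j)) (ss t) - lamf (phi (k j)) (ss t')\<bar> \<le> \<gamma>)" for j
  proof (rule spread[where B="2 * L * (2 + norm d0)" and m=m and C="2 * L * (1 + 2 * real m * \<epsilon>)"])
    show "infinite T" unfolding T_def using Tu by (rule uncountable_infinite)
    show "\<And>t. t \<in> T \<Longrightarrow> \<bar>lamf (phi (k j)) (ss t)\<bar> \<le> 2 * L * (2 + norm d0)" by (rule Bnd)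
    show "\<gamma> > 0" "m \<ge> 1" by (fact gpos) (fact m1)
    show "2 * L * (1 + 2 * real m * \<epsilon>) \<le> real m * \<gamma> / 4" by (fact mC)
    fix P Q assume "P \<subseteq> T" "Q \<subseteq> T" "finite P" "finite Q" "P \<inter> Q = {}" "card P = m" "card Q = m"
    then show "(\<Sum>p\<in>P. lamf (phi (k j)) (ss p)) - (\<Sum>q\<in>Q. lamf (phi (k j)) (ss q))
               \<le> 2 * L * (1 + 2 * real m * \<epsilon>)"
      by (intro count[OF z b ssT]) auto
  qed
  have "\<forall>j. \<exists>F. finite F \<and> (\<forall>t\<in>T - F. \<forall>t'\<in>T - F.
      \<bar>lamf (phi (k j)) (ss t) - lamf (phi (k j)) (ss t')\<bar> \<le> \<gamma>)" using Fex by blast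
  then obtain FF where FF: "\<And>j. finite (FF j) \<and> (\<forall>t\<in>T - FF j. \<forall>t'\<in>T - FF j.
      \<bar>lamf (phi (k j)) (ss t) - lamf (phi (k j)) (ss t')\<bar> \<le> \<gamma>)"
    by (auto dest!: choice)
  define T' where "T' = T - (\<Union>j. FF j)"
  have "uncountable T'" unfolding T'_def T_def
    using Tu FF by (intro uncountable_minus_countable countable_UN) (auto intro: countable_finite)
  then have infT': "infinite T'" by (rule uncountable_infinite)
  then have "T' \<noteq> {}" by auto
  then obtain f1 where f1: "f1 \<in> T'" by blast
  have "infinite (T' - {f1})" using infT' finite_subset[of T' "{f1}"] by auto
  then have "T' - {f1} \<noteq> {}" by (metis finite.emptyI)
  then obtain f2 where f2: "f2 \<in> T' - {f1}" by blast
  have f1T: "f1 \<in> T" "\<And>j. f1 \<notin> FF j" using f1 unfolding T'_def by auto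
  have f2T: "f2 \<in> T" "\<And>j. f2 \<notin> FF j" "f2 \<noteq> f1" using f2 unfolding T'_def by auto
  define u where "u = ss f1 - ss f2"
  have uS: "u \<in> S" unfolding u_def using ssT f1T f2T S by (auto intro: subspace_diff)
  have lim: "(\<lambda>j. phi (k j) u) \<longlonglongrightarrow> 0"
    using LIMSEQ_subseq_LIMSEQ[OF conv[OF uS] k] by (simp add: comp_def)
  have "2 * \<delta> / 5 > 0" using d by simp
  then obtain J where J: "\<And>j. j \<ge> J \<Longrightarrow> norm (phi (k j) u - 0) < 2 * \<delta> / 5"
    using lim unfolding LIMSEQ_iff by blast
  define A1 where "A1 = Af f1"
  define A2 where "A2 = Af f2"
  have "infinite (A1 - A2)"
  proof
    assume "finite (A1 - A2)"
    moreover have "finite (A1 \<inter> A2)" unfolding A1_def A2_def using f2T(3) by (intro Af_almost_disjoint) auto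
    ultimately have "finite ((A1 - A2) \<union> (A1 \<inter> A2))" by simp
    moreover have "(A1 - A2) \<union> (A1 \<inter> A2) = A1" by auto
    ultimately show False unfolding A1_def using Af_infinite by simp
  qed
  then obtain j where j: "j \<ge> J" "j \<in> A1" "j \<notin> A2" unfolding infinite_nat_iff_unbounded_le by blast
  interpret bfun S "phi (k j)" L by (rule bf)
  define Wd where "Wd = w A1 - w A2"
  have Wda: "apply_bcontfun Wd n = (if blk b n \<in> A1 then z n else 0) - (if blk b n \<in> A2 then z n else 0)" for n
    unfolding Wd_def w_def by (simp add: wv_apply[OF z])
  have uW: "norm (u - Wd) \<le> 2 * \<epsilon>"
  proof -
    have "u - Wd = (w A2 - d0 - ss f2) - (w A1 - d0 - ss f1)" unfolding u_def Wd_def by (simp add: algebra_simps)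
    then have "norm (u - Wd) \<le> norm (w A2 - d0 - ss f2) + norm (w A1 - d0 - ss f1)"
      using norm_triangle_ineq4[of "w A2 - d0 - ss f2" "w A1 - d0 - ss f1"] by simp
    moreover have "norm (w A1 - d0 - ss f1) < \<epsilon>" using ssT[OF f1T(1)] unfolding w_def A1_def by simp
    moreover have "norm (w A2 - d0 - ss f2) < \<epsilon>" using ssT[OF f2T(1)] unfolding w_def A2_def by simp
    ultimately show ?thesis by linarith
  qed
  have un: "\<bar>apply_bcontfun u n - apply_bcontfun Wd n\<bar> \<le> 2 * \<epsilon>" for n
    using abs_apply_le[of "u - Wd" n] uW by simp
  have ub: "\<bar>apply_bcontfun u n\<bar> \<le> 1 + 2 * \<epsilon>" for n
  proof -
    have "\<bar>apply_bcontfun Wd n\<bar> \<le> 1" unfolding Wda using z[of n] by auto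
    then show ?thesis using un[of n] by linarith
  qed
  have blkj: "\<bar>apply_bcontfun u n - sgn (coef (phi (k j)) n)\<bar> \<le> 2 * \<epsilon>"
    if "b j \<le> n" "n < b (Suc j)" for n
  proof -
    have bn: "blk b n = j" using blk_eq[OF b(1) that] .
    have "apply_bcontfun Wd n = sgn (coef (phi (k j)) n)" unfolding Wda z_def bn using j by simp
    then show ?thesis using un[of n] by simp
  qed
  have prb: "pr (coef (phi (k j))) u \<ge> \<delta> / 2"
    using H[of j] d epos e1 ub blkj b(1)
    by (intro block_est[where qa="b j" and qb="b (Suc j)"]) (auto simp: strict_mono_less_eq)
  have "lamf (phi (k j)) u = lamf (phi (k j)) (ss f1) - lamf (phi (k j)) (ss f2)"
    unfolding u_def using lin_on.diff[OF lam_lin] ssT f1T f2T by auto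
  moreover have "\<bar>lamf (phi (k j)) (ss f1) - lamf (phi (k j)) (ss f2)\<bar> \<le> \<gamma>"
    using FF[of j] f1T f2T by auto
  ultimately have "\<bar>lamf (phi (k j)) u\<bar> \<le> \<delta> / 10" unfolding \<gamma>_def by simp
  moreover have "phi (k j) u = pr (coef (phi (k j))) u + lamf (phi (k j)) u" unfolding lamf_def by simp
  ultimately have "phi (k j) u \<ge> 2 * \<delta> / 5" using prb by (simp add: abs_le_iff)
  moreover have "\<bar>phi (k j) u\<bar> < 2 * \<delta> / 5" using J[OF j(1)] by simp
  ultimately show False by simp
qed

lemma core_main:
  assumes sq: "separable_quotient S"
  shows "(\<lambda>k. \<Sum>n. \<bar>coef (phi k) n\<bar>) \<longlonglongrightarrow> 0"
proof (rule ccontr)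
  assume nc: "\<not> ?thesis"
  have nn: "0 \<le> (\<Sum>n. \<bar>coef (phi k) n\<bar>)" for k by (intro suminf_nonneg l1s) auto
  from nc obtain \<delta> where d: "\<delta> > 0" and inf0: "\<And>K. \<exists>k\<ge>K. \<not> norm ((\<Sum>n. \<bar>coef (phi k) n\<bar>) - 0) < \<delta>"
    unfolding LIMSEQ_iff by blast
  have inf: "\<exists>k\<ge>K. \<delta> \<le> (\<Sum>n. \<bar>coef (phi k) n\<bar>)" for K
  proof -
    obtain k where "k \<ge> K" "\<not> norm ((\<Sum>n. \<bar>coef (phi k) n\<bar>) - 0) < \<delta>" using inf0 by blast
    then show ?thesis using nn[of k] by (intro exI[of _ k]) auto
  qed
  obtain kk b where hb: "strict_mono kk" "strict_mono b" "b 0 = 0"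
    "\<forall>j. (\<Sum>n<b j. \<bar>coef (phi (kk j)) n\<bar>) < \<delta>/10 \<and> \<delta> \<le> (\<Sum>n. \<bar>coef (phi (kk j)) n\<bar>) \<and>
         (\<Sum>n. \<bar>coef (phi (kk j)) n\<bar>) - (\<Sum>n<b (Suc j). \<bar>coef (phi (kk j)) n\<bar>) < \<delta>/10"
    using hump[OF d inf, of "\<delta>/10"] d by auto
  show False by (rule final[OF sq d hb(1,2,3)]) (use hb(4) in blast)
qed

end



lemma dual_bfun:
  assumes "subspace S" "c0 \<subseteq> S" "dual_elem S f"
  shows "\<exists>K. bfun S f K"
proof -
  obtain K where K: "\<forall>x\<in>S. \<bar>f x\<bar> \<le> K * norm x" using assms(3) unfolding dual_elem_def by blast
  have "bfun S f \<bar>K\<bar>"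
    unfolding bfun_def bfun_axioms_def
  proof (intro conjI allI impI)
    show "lin_on S f" by (rule dual_lin_on[OF assms(1,3)])
    show "c0 \<subseteq> S" by (fact assms(2))
    show "\<bar>K\<bar> \<ge> 0" by simp
    fix x assume "x \<in> S"
    then have "\<bar>f x\<bar> \<le> K * norm x" using K by blast
    also have "\<dots> \<le> \<bar>K\<bar> * norm x" by (intro mult_right_mono) auto
    finally show "\<bar>f x\<bar> \<le> \<bar>K\<bar> * norm x" .
  qed
  then show ?thesis by blast
qed

theorem corollary3p2:
  fixes S :: "linf set"
  assumes "subspace S" and "closed S" and "c0 \<subseteq> S"
    and "separable_quotient S"
  shows "linf_grothendieck S"
proof -
  have "\<forall>phi psi. (\<forall>k. dual_elem S (phi k)) \<and> dual_elem S psi \<and> weak_star_conv S phi psi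
        \<longrightarrow> linf_conv phi psi"
  proof (intro allI impI)
    fix phi :: "nat \<Rightarrow> linf \<Rightarrow> real" and psi :: "linf \<Rightarrow> real"
    assume H: "(\<forall>k. dual_elem S (phi k)) \<and> dual_elem S psi \<and> weak_star_conv S phi psi"
    have dk: "\<And>k. dual_elem S (phi k)" and dp: "dual_elem S psi" and ws: "weak_star_conv S phi psi"
      using H by auto
    have bk: "\<exists>K. bfun S (phi k) K" for k using dual_bfun[OF assms(1,3) dk] .
    obtain Kp where bp: "bfun S psi Kp" using dual_bfun[OF assms(1,3) dp] by blast
    define phi' where "phi' k x = phi k x - psi x" for k x
    have lin': "lin_on S (phi' k)" for k
    proof -
      obtain K where bK: "bfun S (phi k) K" using bk by blast
      interpret A: bfun S "phi k" K by (fact bK)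
      interpret B: bfun S psi Kp by (fact bp)
      show ?thesis unfolding lin_on_def phi'_def
        using assms(1) by (simp add: A.add B.add A.scal B.scal algebra_simps)
    qed
    have bd': "\<exists>K. \<forall>x\<in>S. \<bar>phi' k x\<bar> \<le> K * norm x" for k
    proof -
      obtain K where bK: "bfun S (phi k) K" using bk by blast
      interpret A: bfun S "phi k" K by (fact bK)
      interpret B: bfun S psi Kp by (fact bp)
      have "\<bar>phi' k x\<bar> \<le> (K + Kp) * norm x" if "x \<in> S" for x
        unfolding phi'_def using A.bnd[OF that] B.bnd[OF that] by (simp add: distrib_right abs_diff_le_iff) linarith
      then show ?thesis by blast
    qed
    have conv': "(\<lambda>k. phi' k x) \<longlonglongrightarrow> 0" if "x \<in> S" for x
    proof -
      have "(\<lambda>k. phi k x) \<longlonglongrightarrow> psi x" using ws that unfolding weak_star_conv_def by blast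
      then have "(\<lambda>k. phi k x - psi x) \<longlonglongrightarrow> psi x - psi x" by (intro tendsto_intros)
      then show ?thesis unfolding phi'_def by simp
    qed
    have pw: "\<exists>B. \<forall>k. \<bar>phi' k x\<bar> \<le> B" if "x \<in> S" for x
    proof -
      have "Bseq (\<lambda>k. phi' k x)" using conv'[OF that] by (intro convergent_imp_Bseq convergentI)
      then show ?thesis unfolding Bseq_def by auto
    qed
    obtain L where L: "L > 0" "\<forall>k. \<forall>x\<in>S. \<bar>phi' k x\<bar> \<le> L * norm x"
      using ubp[OF assms(1,2) lin' bd' pw] by blast
    interpret C: core S phi' L
      unfolding core_def using assms lin' L conv' by auto
    have N0: "(\<lambda>k. \<Sum>n. \<bar>coef (phi' k) n\<bar>) \<longlonglongrightarrow> 0" by (rule C.core_main[OF assms(4)])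
    show "linf_conv phi psi"
      unfolding linf_conv_def
    proof
      fix z :: linf
      define c where "c = (\<Sum>n. apply_bcontfun z n * psi (unitvec n))"
      have eq: "(\<Sum>n. apply_bcontfun z n * phi k (unitvec n)) - c = pr (coef (phi' k)) z" for k
      proof -
        obtain K where bK: "bfun S (phi k) K" using bk by blast
        have s1: "summable (\<lambda>n. apply_bcontfun z n * coef (phi k) n)"
          by (rule pr_summable(2)[OF bfun.l1_summable[OF bK]])
        have s2: "summable (\<lambda>n. apply_bcontfun z n * coef psi n)"
          by (rule pr_summable(2)[OF bfun.l1_summable[OF bp]])
        show ?thesis
          unfolding c_def pr_def using suminf_diff[OF s1 s2]
          by (simp add: coef_def phi'_def right_diff_distrib)
      qed
      have "(\<lambda>k. pr (coef (phi' k)) z) \<longlonglongrightarrow> 0"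
      proof (rule Lim_null_comparison)
        show "\<forall>\<^sub>F k in sequentially. norm (pr (coef (phi' k)) z) \<le> norm z * (\<Sum>n. \<bar>coef (phi' k) n\<bar>)"
          using pr_bound[OF C.l1s] by simp
        show "(\<lambda>k. norm z * (\<Sum>n. \<bar>coef (phi' k) n\<bar>)) \<longlonglongrightarrow> 0"
          using tendsto_mult_right_zero[OF N0] by simp
      qed
      then have "(\<lambda>k. ((\<Sum>n. apply_bcontfun z n * phi k (unitvec n)) - c) + c) \<longlonglongrightarrow> 0 + c"
        unfolding eq by (intro tendsto_add tendsto_const)
      then show "(\<lambda>k. \<Sum>n. apply_bcontfun z n * phi k (unitvec n)) \<longlonglongrightarrow> c" by simp
    qed
  qed
  then show ?thesis unfolding linf_grothendieck_def using assms(3) by blast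
qed


end
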